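(* Let $C>0$, $\bar w\in[0,1]$, $\Psi_{\mathrm{prev}}\in[0,2]$, and let $\Psi$ be the limiter $$\Psi(r)=\max\big\{0,\ \min\{(2C+\Psi_{\mathrm{prev}})\,r,\ 1-\bar w+\bar w r,\ 2\}\big\}.$$ Suppose real numbers $Q_i^n,Q_i^{n-1},Q_{i-1}^n,Q_{i-1}^{n+1}$ satisfy the high-resolution compact inverse scheme $$Q_i^n + \tfrac12\Psi(r_i^n)\,(Q_{i-1}^{n+1}-Q_i^n) + C\,Q_i^n = Q_i^{n-1} + \tfrac12\Psi_{\mathrm{prev}}\,(Q_{i-1}^{n}-Q_i^{n-1}) + C\,Q_{i-1}^n,\qquad r_i^n=\frac{Q_{i-1}^n-Q_i^{n-1}}{Q_{i-1}^{n+1}-Q_i^n},$$ with the convention that the term $\Psi(r_i^n)(Q_{i-1}^{n+1}-Q_i^n)$ equals $0$ when $Q_{i-1}^{n+1}=Q_i^n$. Then $$\min\{Q_i^{n-1},Q_{i-1}^n\}\le Q_i^n\le \max\{Q_i^{n-1},Q_{i-1}^n\},$$ for every value of $C>0$ (no restriction on the Courant number).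
   Context: Scheme for $\kappa\partial_tq+v(t)\partial_xq=0$ on a space grid $x_i$ with steps $h_i$ and uniform time step $\tau$; $Q_i^n\approx q(x_i,t^n)$, $C=C_i^n=v^n\tau/(\kappa h_i)$ is the local Courant number, and $\Psi_{\mathrm{prev}}=\Psi(r_i^{n-1})$ is the (already computed) limiter value of the previous time level; values are computed by marching in space ($i=1,2,\dots$) and, for each $i$, in time ($n=1,2,\dots$). *)

theory Defs
  imports Complex_Main
begin

definition limiter :: "real \<Rightarrow> real \<Rightarrow> real \<Rightarrow> real \<Rightarrow> real" where
  "limiter C wbar psiprev r = max 0 (min ((2 * C + psiprev) * r) (min (1 - wbar + wbar * r) 2))"

definition limited_term :: "real \<Rightarrow> real \<Rightarrow> real \<Rightarrow> real \<Rightarrow> real \<Rightarrow> real \<Rightarrow> real \<Rightarrow> real" where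
  "limited_term C wbar psiprev Qin Qin1 Qi1n Qi1np1 =
     (if Qi1np1 = Qin then 0
      else limiter C wbar psiprev ((Qi1n - Qin1) / (Qi1np1 - Qin)) * (Qi1np1 - Qin))"

end

theory Submission
  imports Defs
begin

lemma lim_props:
  fixes k r u :: real
  assumes "0 \<le> k"
  shows "0 \<le> max 0 (min (k * r) (min u 2))"
    and "r \<le> 0 \<Longrightarrow> max 0 (min (k * r) (min u 2)) = 0"
    and "max 0 (min (k * r) (min u 2)) \<le> max 0 (k * r)"
proof -
  show "0 \<le> max 0 (min (k * r) (min u 2))" by simp
  show "r \<le> 0 \<Longrightarrow> max 0 (min (k * r) (min u 2)) = 0"
  proof -
    assume "r \<le> 0"
    then have "k * r \<le> 0" using assms by (simp add: mult_nonneg_nonpos)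
    then show ?thesis by simp
  qed
  show "max 0 (min (k * r) (min u 2)) \<le> max 0 (k * r)" by simp
qed

lemma L_bounds:
  fixes C wbar psiprev Qin Qin1 Qi1n Qi1np1 :: real
  assumes "C > 0" "0 \<le> psiprev"
  defines "L \<equiv> limited_term C wbar psiprev Qin Qin1 Qi1n Qi1np1"
  shows "(Qi1n - Qin1 \<ge> 0 \<longrightarrow> 0 \<le> L \<and> L \<le> (2*C+psiprev)*(Qi1n - Qin1))
       \<and> (Qi1n - Qin1 \<le> 0 \<longrightarrow> (2*C+psiprev)*(Qi1n - Qin1) \<le> L \<and> L \<le> 0)"
proof (cases "Qi1np1 = Qin")
  case True
  then show ?thesis using assms by (simp add: limited_term_def mult_nonneg_nonpos)
next
  case False
  define d where "d = Qi1np1 - Qin"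
  define e where "e = Qi1n - Qin1"
  define k where "k = 2*C+psiprev"
  have k0: "k \<ge> 0" using assms unfolding k_def by simp
  have d0: "d \<noteq> 0" using False d_def by simp
  define P where "P = limiter C wbar psiprev (e/d)"
  have LP: "L = P * d" using False unfolding L_def P_def limited_term_def d_def e_def by simp
  have P0: "0 \<le> P" unfolding P_def limiter_def by simp
  have Pz: "e/d \<le> 0 \<Longrightarrow> P = 0" unfolding P_def limiter_def k_def[symmetric]
    using lim_props(2)[OF k0] by blast
  have Pk: "P \<le> max 0 (k * (e/d))" unfolding P_def limiter_def k_def[symmetric]
    using lim_props(3)[OF k0] by blast
  have ed: "(e/d) * d = e" using d0 by simp
  have main: "(e \<ge> 0 \<longrightarrow> 0 \<le> L \<and> L \<le> k*e) \<and> (e \<le> 0 \<longrightarrow> k*e \<le> L \<and> L \<le> 0)"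
  proof (cases "e/d \<le> 0")
    case True
    then have "L = 0" using LP Pz by simp
    moreover have "e \<ge> 0 \<longrightarrow> 0 \<le> k*e" "e \<le> 0 \<longrightarrow> k*e \<le> 0" using k0
      by (auto simp: mult_nonneg_nonpos)
    ultimately show ?thesis by simp
  next
    case False
    then have "k*(e/d) \<ge> 0" using k0 by (intro mult_nonneg_nonneg) auto
    then have Pk': "P \<le> k*(e/d)" using Pk by (simp add: max_def)
    show ?thesis
    proof (cases "d > 0")
      case True
      then have e0: "e > 0" using False by (simp add: not_le zero_less_divide_iff)
      have "P*d \<le> k*e" using Pk' True by (simp add: pos_le_divide_eq)
      then have "L \<le> k*e" using LP by simp
      moreover have "0 \<le> L" using LP P0 True by simp
      ultimately show ?thesis using e0 by auto
    next
      case dn: False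
      then have dneg: "d < 0" using d0 by simp
      then have e0: "e < 0" using False by (simp add: not_le zero_less_divide_iff)
      have "k*e \<le> P*d" using Pk' dneg by (simp add: neg_le_divide_eq)
      then have "k*e \<le> L" using LP by simp
      moreover have "L \<le> 0" using LP P0 dneg by (simp add: mult_nonneg_nonpos)
      ultimately show ?thesis using e0 by auto
    qed
  qed
  then show ?thesis unfolding e_def k_def by simp
qed

theorem mainTheorem5:
  fixes C wbar psiprev Qin Qin1 Qi1n Qi1np1 :: real
  assumes "C > 0"
    and "0 \<le> wbar" and "wbar \<le> 1"
    and "0 \<le> psiprev" and "psiprev \<le> 2"
    and "Qin + (1/2) * limited_term C wbar psiprev Qin Qin1 Qi1n Qi1np1 + C * Qin
         = Qin1 + (1/2) * psiprev * (Qi1n - Qin1) + C * Qi1n"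
  shows "min Qin1 Qi1n \<le> Qin \<and> Qin \<le> max Qin1 Qi1n"
proof -
  define L where "L = limited_term C wbar psiprev Qin Qin1 Qi1n Qi1np1"
  have B: "(Qi1n - Qin1 \<ge> 0 \<longrightarrow> 0 \<le> L \<and> L \<le> (2*C+psiprev)*(Qi1n - Qin1))
       \<and> (Qi1n - Qin1 \<le> 0 \<longrightarrow> (2*C+psiprev)*(Qi1n - Qin1) \<le> L \<and> L \<le> 0)"
    using L_bounds[OF assms(1) assms(4)] unfolding L_def by blast
  have E1: "(1+C)*(Qin - Qin1) = (C + psiprev/2)*(Qi1n - Qin1) - L/2"
    using assms(6) unfolding L_def by (simp add: algebra_simps)
  have E2: "(1+C)*(Qin - Qi1n) = (psiprev/2 - 1)*(Qi1n - Qin1) - L/2"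
    using assms(6) unfolding L_def by (simp add: algebra_simps)
  have c: "1 + C > 0" using assms(1) by simp
  show ?thesis
  proof (cases "Qi1n - Qin1 \<ge> 0")
    case True
    have "(C + psiprev/2)*(Qi1n - Qin1) - L/2 \<ge> 0" using B True by (simp add: field_simps)
    then have "(1+C)*(Qin - Qin1) \<ge> 0" using E1 by simp
    then have a: "Qin \<ge> Qin1" using c by (simp add: zero_le_mult_iff)
    have "(psiprev/2 - 1)*(Qi1n - Qin1) \<le> 0" using assms(5) True
      by (simp add: mult_nonpos_nonneg)
    then have "(1+C)*(Qin - Qi1n) \<le> 0" using E2 B True by simp
    then have b: "Qin \<le> Qi1n" using c by (simp add: mult_le_0_iff)
    show ?thesis using a b True by simp
  next
    case False
    then have F: "Qi1n - Qin1 \<le> 0" by simp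
    have "(C + psiprev/2)*(Qi1n - Qin1) - L/2 \<le> 0" using B F by (simp add: field_simps)
    then have "(1+C)*(Qin - Qin1) \<le> 0" using E1 by simp
    then have a: "Qin \<le> Qin1" using c by (simp add: mult_le_0_iff)
    have "(psiprev/2 - 1)*(Qi1n - Qin1) \<ge> 0" using assms(5) F
      by (simp add: mult_nonpos_nonpos)
    then have "(1+C)*(Qin - Qi1n) \<ge> 0" using E2 B F by simp
    then have b: "Qin \<ge> Qi1n" using c by (simp add: zero_le_mult_iff)
    show ?thesis using a b F by simp
  qed
qed

end
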